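(* Let $n\ge 2$, let $\mathcal{S}\subseteq(\mathbb{C}^d)^{\otimes n}$ be the permutation-symmetric subspace, let $|\psi\rangle\in\mathcal{S}$ and let $X$ be a $d\times d$ complex matrix with $X_{(1)}|\psi\rangle\in\mathcal{S}$. Then $X^p_{(1)}|\psi\rangle\in\mathcal{S}$ for every natural number $p\ge 0$; if moreover $X$ is invertible, this holds for every integer $p$.
   Context: $\mathcal{S}$ is the set of vectors in $(\mathbb{C}^d)^{\otimes n}$ invariant under all permutations of the $n$ tensor factors. For a $d\times d$ matrix $X$, $X^p_{(1)}$ denotes the operator $X^p\otimes\mathbb{I}\otimes\cdots\otimes\mathbb{I}$ on $(\mathbb{C}^d)^{\otimes n}$. *)

theory Defs
  imports "HOL-Analysis.Analysis"
begin

text \<open>A vector of the tensor power (C^d)^{otimes n} is represented by its coordinate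
  function on multi-indices, i.e. lists of length n over the finite index type 'd;
  coordinates at lists of other lengths are required to vanish.\<close>

definition tensor_space :: "nat \<Rightarrow> ('d::finite list \<Rightarrow> complex) set" where
  "tensor_space n = {\<psi>. \<forall>xs. length xs \<noteq> n \<longrightarrow> \<psi> xs = 0}"

definition sym_subspace :: "nat \<Rightarrow> ('d::finite list \<Rightarrow> complex) set" where
  "sym_subspace n = {\<psi> \<in> tensor_space n.
     \<forall>\<sigma>. \<sigma> permutes {..<n} \<longrightarrow>
       (\<forall>xs. length xs = n \<longrightarrow> \<psi> (map (\<lambda>k. xs ! \<sigma> k) [0..<n]) = \<psi> xs)}"

definition op_first :: "complex^'d^'d \<Rightarrow> ('d::finite list \<Rightarrow> complex) \<Rightarrow> ('d list \<Rightarrow> complex)" where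
  "op_first X \<psi> xs = (case xs of [] \<Rightarrow> 0 | i # is \<Rightarrow> (\<Sum>j\<in>UNIV. X $ i $ j * \<psi> (j # is)))"

primrec mat_pow :: "complex^'d^'d \<Rightarrow> nat \<Rightarrow> complex^'d^'d" where
  "mat_pow X 0 = mat 1"
| "mat_pow X (Suc p) = X ** mat_pow X p"

definition mat_ipow :: "complex^'d^'d \<Rightarrow> int \<Rightarrow> complex^'d^'d" where
  "mat_ipow X p = (if 0 \<le> p then mat_pow X (nat p) else mat_pow (matrix_inv X) (nat (- p)))"

end

theory Submission
  imports Defs
begin

definition op_at :: "nat \<Rightarrow> complex^'d^'d \<Rightarrow> ('d::finite list \<Rightarrow> complex) \<Rightarrow> 'd list \<Rightarrow> complex" where
  "op_at k Y f xs = (if k < length xs then (\<Sum>j\<in>UNIV. Y$(xs!k)$j * f (xs[k:=j])) else 0)"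

definition permf :: "nat \<Rightarrow> (nat \<Rightarrow> nat) \<Rightarrow> ('d list \<Rightarrow> complex) \<Rightarrow> 'd list \<Rightarrow> complex" where
  "permf n \<sigma> f ys = (if length ys = n then f (map (\<lambda>m. ys ! \<sigma> m) [0..<n]) else f ys)"

lemma L0: "op_first Y f = op_at 0 Y f"
  by (rule ext, case_tac x) (simp_all add: op_at_def op_first_def)

lemma L1: "f \<in> tensor_space n \<Longrightarrow> op_at k Y f \<in> tensor_space n"
  by (simp add: tensor_space_def op_at_def)

lemma L2: assumes "f \<in> tensor_space n" "k < n" shows "op_at k (mat 1) f = f"
proof
  fix xs :: "'a list"
  show "op_at k (mat 1) f xs = f xs"
  proof (cases "length xs = n")
    case True
    have "(\<Sum>j\<in>UNIV. (mat 1 :: complex^'a^'a)$(xs!k)$j * f (xs[k:=j]))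
        = (\<Sum>j\<in>UNIV. if j = xs!k then f (xs[k:=j]) else 0)"
      by (rule sum.cong) (auto simp: mat_def)
    also have "\<dots> = f xs" by simp
    finally show ?thesis using True assms by (simp add: op_at_def)
  next
    case False
    then show ?thesis using assms by (simp add: op_at_def tensor_space_def)
  qed
qed

lemma L3: "op_at k (A ** B) f = op_at k A (op_at k B f)"
proof
  fix xs :: "'a list"
  show "op_at k (A ** B) f xs = op_at k A (op_at k B f) xs"
  proof (cases "k < length xs")
    case True
    have "(\<Sum>m\<in>UNIV. (A ** B)$(xs!k)$m * f (xs[k:=m]))
      = (\<Sum>m\<in>UNIV. \<Sum>j\<in>UNIV. A$(xs!k)$j * B$j$m * f (xs[k:=m]))"
      by (simp add: matrix_matrix_mult_def sum_distrib_right)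
    also have "\<dots> = (\<Sum>j\<in>UNIV. \<Sum>m\<in>UNIV. A$(xs!k)$j * B$j$m * f (xs[k:=m]))"
      by (rule sum.swap)
    also have "\<dots> = (\<Sum>j\<in>UNIV. A$(xs!k)$j * (\<Sum>m\<in>UNIV. B$j$m * f (xs[k:=m])))"
      by (simp add: sum_distrib_left mult.assoc)
    finally show ?thesis using True by (simp add: op_at_def)
  next
    case False
    then show ?thesis by (simp add: op_at_def)
  qed
qed

lemma L4: assumes "k \<noteq> l" shows "op_at k A (op_at l B f) = op_at l B (op_at k A f)"
proof
  fix xs :: "'a list"
  show "op_at k A (op_at l B f) xs = op_at l B (op_at k A f) xs"
  proof (cases "k < length xs \<and> l < length xs")
    case True
    have "(\<Sum>j\<in>UNIV. A$(xs!k)$j * (\<Sum>m\<in>UNIV. B$(xs!l)$m * f ((xs[k:=j])[l:=m])))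
      = (\<Sum>j\<in>UNIV. \<Sum>m\<in>UNIV. A$(xs!k)$j * B$(xs!l)$m * f ((xs[k:=j])[l:=m]))"
      by (simp add: sum_distrib_left mult.assoc)
    also have "\<dots> = (\<Sum>m\<in>UNIV. \<Sum>j\<in>UNIV. A$(xs!k)$j * B$(xs!l)$m * f ((xs[k:=j])[l:=m]))"
      by (rule sum.swap)
    also have "\<dots> = (\<Sum>m\<in>UNIV. B$(xs!l)$m * (\<Sum>j\<in>UNIV. A$(xs!k)$j * f ((xs[l:=m])[k:=j])))"
      using assms by (simp add: sum_distrib_left list_update_swap mult.commute mult.left_commute)
    finally show ?thesis using True assms by (simp add: op_at_def nth_list_update_neq)
  next
    case False
    then show ?thesis by (auto simp: op_at_def)
  qed
qed

lemma L5: assumes "f \<in> tensor_space n" "k < n"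
  shows "op_at k (mat_pow Y p) f = (op_at k Y ^^ p) f"
  by (induction p) (simp_all add: L2[OF assms] L3)

lemma L6:
  assumes "\<sigma> permutes {..<n}" "k < n" "length xs = n"
  shows "op_at k Y f (map (\<lambda>m. xs!\<sigma> m) [0..<n]) = op_at (\<sigma> k) Y (permf n \<sigma> f) xs"
proof -
  have sk: "\<sigma> k < n" using assms permutes_in_image by fastforce
  have eq: "(map (\<lambda>m. xs!\<sigma> m) [0..<n])[k:=j] = map (\<lambda>m. xs[\<sigma> k:=j] ! \<sigma> m) [0..<n]" for j
  proof (rule nth_equalityI)
    fix m assume "m < length ((map (\<lambda>m. xs!\<sigma> m) [0..<n])[k:=j])"
    then have m: "m < n" by simp
    have sm: "\<sigma> m < n" using assms(1) m permutes_in_image by fastforce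
    have "(\<sigma> m = \<sigma> k) = (m = k)" using permutes_inj[OF assms(1)] by (auto dest: injD)
    then show "(map (\<lambda>m. xs!\<sigma> m) [0..<n])[k:=j] ! m = map (\<lambda>m. xs[\<sigma> k:=j] ! \<sigma> m) [0..<n] ! m"
      using m sm assms by (auto simp: nth_list_update)
  qed simp
  show ?thesis using assms sk
    by (simp add: op_at_def permf_def eq)
qed

lemma L7: fixes g :: "'d::finite list \<Rightarrow> complex" shows "g \<in> sym_subspace n \<longleftrightarrow> g \<in> tensor_space n \<and> (\<forall>\<sigma>. \<sigma> permutes {..<n} \<longrightarrow> permf n \<sigma> g = g)"
proof
  assume "g \<in> sym_subspace n"
  then show "g \<in> tensor_space n \<and> (\<forall>\<sigma>. \<sigma> permutes {..<n} \<longrightarrow> permf n \<sigma> g = g)"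
    by (auto simp: sym_subspace_def permf_def fun_eq_iff)
next
  assume h: "g \<in> tensor_space n \<and> (\<forall>\<sigma>. \<sigma> permutes {..<n} \<longrightarrow> permf n \<sigma> g = g)"
  have "\<forall>\<sigma>. \<sigma> permutes {..<n} \<longrightarrow> (\<forall>xs. length xs = n \<longrightarrow> g (map (\<lambda>k. xs ! \<sigma> k) [0..<n]) = g xs)"
  proof (intro allI impI)
    fix \<sigma> and xs :: "'d list"
    assume a: "\<sigma> permutes {..<n}" and b: "length xs = n"
    have "permf n \<sigma> g xs = g xs" using h a by simp
    then show "g (map (\<lambda>k. xs ! \<sigma> k) [0..<n]) = g xs" using b by (simp add: permf_def)
  qed
  then show "g \<in> sym_subspace n" using h unfolding sym_subspace_def by blast
qed

lemma symD: "g \<in> sym_subspace n \<Longrightarrow> \<sigma> permutes {..<n} \<Longrightarrow> permf n \<sigma> g = g"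
  using L7 by blast

lemma symT: "g \<in> sym_subspace n \<Longrightarrow> g \<in> tensor_space n"
  using L7 by blast

lemma A:
  assumes f: "f \<in> sym_subspace n" and g: "op_at 0 Y f \<in> sym_subspace n" and k: "k < n"
  shows "op_at k Y f = op_at 0 Y f"
proof
  fix xs :: "'a list"
  define \<sigma> where "\<sigma> = Transposition.transpose 0 k"
  have sp: "\<sigma> permutes {..<n}" unfolding \<sigma>_def using k by (intro permutes_swap_id) auto
  show "op_at k Y f xs = op_at 0 Y f xs"
  proof (cases "length xs = n")
    case True
    have "op_at 0 Y f xs = permf n \<sigma> (op_at 0 Y f) xs" using symD[OF g sp] by simp
    also have "\<dots> = op_at (\<sigma> 0) Y (permf n \<sigma> f) xs"
      using True k by (simp add: permf_def L6[OF sp])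
    also have "\<dots> = op_at k Y f xs" using symD[OF f sp] by (simp add: \<sigma>_def)
    finally show ?thesis by simp
  next
    case False
    then show ?thesis using L1[OF symT[OF f]] by (simp add: tensor_space_def)
  qed
qed

lemma commute_pow: "k \<noteq> 0 \<Longrightarrow> (op_at 0 Y ^^ p) (op_at k Y g) = op_at k Y ((op_at 0 Y ^^ p) g)"
  by (induction p) (simp_all add: L4)

lemma B:
  assumes "\<forall>k<n. op_at k Y f = op_at 0 Y f" "k < n"
  shows "(op_at k Y ^^ p) f = (op_at 0 Y ^^ p) f"
proof (cases "k = 0")
  case False
  show ?thesis
  proof (induction p)
    case (Suc p)
    have "(op_at 0 Y ^^ Suc p) f = (op_at 0 Y ^^ p) (op_at 0 Y f)" by (simp only: funpow_Suc_right comp_def)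
    also have "\<dots> = (op_at 0 Y ^^ p) (op_at k Y f)"
      using assms by (metis (no_types))
    also have "\<dots> = op_at k Y ((op_at 0 Y ^^ p) f)" by (rule commute_pow[OF False])
    also have "\<dots> = (op_at k Y ^^ Suc p) f" using Suc by simp
    finally show ?case by simp
  qed simp
qed (simp add: funpow_swap1)

lemma C:
  assumes f: "f \<in> sym_subspace n" and n: "0 < n" and h: "\<forall>k<n. op_at k Z f = op_at 0 Z f"
  shows "op_at 0 Z f \<in> sym_subspace n"
  unfolding L7
proof (safe)
  show "op_at 0 Z f \<in> tensor_space n" by (rule L1[OF symT[OF f]])
  fix \<sigma> assume sp: "\<sigma> permutes {..<n}"
  have s0: "\<sigma> 0 < n" using sp n permutes_in_image by fastforce
  show "permf n \<sigma> (op_at 0 Z f) = op_at 0 Z f"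
  proof
    fix xs :: "'a list"
    show "permf n \<sigma> (op_at 0 Z f) xs = op_at 0 Z f xs"
    proof (cases "length xs = n")
      case True
      have "permf n \<sigma> (op_at 0 Z f) xs = op_at (\<sigma> 0) Z (permf n \<sigma> f) xs"
        using True n by (simp add: permf_def L6[OF sp])
      also have "\<dots> = op_at 0 Z f xs"
      proof -
        have e: "op_at (\<sigma> 0) Z f = op_at 0 Z f" using h s0 by blast
        show ?thesis by (simp only: symD[OF f sp] e)
      qed
      finally show ?thesis .
    qed (simp add: permf_def)
  qed
qed

lemma D:
  assumes f: "f \<in> sym_subspace n" and n: "0 < n" and h: "\<forall>k<n. op_at k Y f = op_at 0 Y f"
  shows "op_at 0 (mat_pow Y p) f \<in> sym_subspace n"
proof (rule C[OF f n], intro allI impI)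
  fix k assume k: "k < n"
  show "op_at k (mat_pow Y p) f = op_at 0 (mat_pow Y p) f"
    using L5[OF symT[OF f] k] L5[OF symT[OF f] n] B[OF h k] by simp
qed

theorem lemma4:
  fixes n :: nat and \<psi> :: "'d::finite list \<Rightarrow> complex" and X :: "complex^'d^'d"
  assumes "n \<ge> 2"
    and "\<psi> \<in> sym_subspace n"
    and "op_first X \<psi> \<in> sym_subspace n"
  shows "(\<forall>p::nat. op_first (mat_pow X p) \<psi> \<in> sym_subspace n)
       \<and> (invertible X \<longrightarrow> (\<forall>p::int. op_first (mat_ipow X p) \<psi> \<in> sym_subspace n))"
proof -
  have n: "0 < n" using assms(1) by simp
  have hX: "\<forall>k<n. op_at k X \<psi> = op_at 0 X \<psi>"
  proof -
    have h0: "op_at 0 X \<psi> \<in> sym_subspace n" using assms(3) by (simp add: L0)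
    show ?thesis using A[OF assms(2) h0] by blast
  qed
  have P1: "\<forall>p::nat. op_first (mat_pow X p) \<psi> \<in> sym_subspace n"
    using D[OF assms(2) n hX] by (simp add: L0)
  have P2: "\<forall>p::int. op_first (mat_ipow X p) \<psi> \<in> sym_subspace n" if inv: "invertible X"
  proof -
    define Z where "Z = matrix_inv X"
    have ZX: "Z ** X = mat 1"
      using inv unfolding Z_def invertible_def matrix_inv_def by (metis (mono_tags, lifting) someI_ex)
    have T: "\<psi> \<in> tensor_space n" by (rule symT[OF assms(2)])
    have hZ: "\<forall>k<n. op_at k Z \<psi> = op_at 0 Z \<psi>"
    proof (intro allI impI)
      fix k assume k: "k < n"
      show "op_at k Z \<psi> = op_at 0 Z \<psi>"
      proof (cases "k = 0")
        case False
        have "op_at k Z \<psi> = op_at k Z (op_at 0 (Z ** X) \<psi>)" using L2[OF T n] ZX by simp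
        also have "\<dots> = op_at k Z (op_at 0 Z (op_at k X \<psi>))" using hX k by (metis L3)
        also have "\<dots> = op_at 0 Z (op_at k Z (op_at k X \<psi>))" using False by (simp add: L4)
        also have "\<dots> = op_at 0 Z \<psi>" using L2[OF T k] ZX by (simp add: L3[symmetric])
        finally show ?thesis .
      qed simp
    qed
    show ?thesis
    proof
      fix p :: int
      show "op_first (mat_ipow X p) \<psi> \<in> sym_subspace n"
        using P1 D[OF assms(2) n hZ] by (simp add: mat_ipow_def L0 Z_def)
    qed
  qed
  show ?thesis using P1 P2 by blast
qed

end
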